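(* Let $k\ge1$ and $B>0$ be constants and let $F:[0,1]^2\to[0,1]^2$ be as defined below. 1. If $B<2$, then $(1/2,1/2)$ is the unique fixed point of $F$, and it is Jacobian attractive. 2. If $B>2$, then the system $\exp(B\sqrt k(1-2\alpha_R))=\frac{1-\alpha_L}{\alpha_L}$, $\exp(\frac{B}{\sqrt k}(1-2\alpha_L))=\frac{1-\alpha_R}{\alpha_R}$ has exactly one solution $(\alpha_L^*,\alpha_R^* )$ with $\alpha_L^*,\alpha_R^*\in(1/2,1)$; this point is the unique fixed point of $F$, and it is Jacobian attractive.
   Context: The map $F$: for $(\alpha_L,\alpha_R)\in[0,1]^2$, if $\sqrt{\alpha_L\alpha_R}\,B\le1$ set $(\theta_L,\theta_R)=(0,0)$; otherwise let $(\theta_L,\theta_R)$ be the unique solution with $\theta_L,\theta_R>0$ of $\exp(-B\sqrt k\,\alpha_R\theta_R)=1-\theta_L$ and $\exp(-\frac{B}{\sqrt k}\alpha_L\theta_L)=1-\theta_R$. Then $F(\alpha_L,\alpha_R)=\big(\tfrac12(1+\theta_L\alpha_L),\tfrac12(1+\theta_R\alpha_R)\big)$. A fixed point is Jacobian attractive if $F$ is differentiable there and all eigenvalues of its Jacobian matrix have absolute value strictly less than $1$. *)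

theory Defs
  imports "HOL-Analysis.Analysis"
begin

definition theta :: "real \<Rightarrow> real \<Rightarrow> real \<times> real \<Rightarrow> real \<times> real" where
  "theta B k a = (let aL = fst a; aR = snd a in
     if sqrt (aL * aR) * B \<le> 1 then (0, 0)
     else (THE t. fst t > 0 \<and> snd t > 0 \<and>
                  exp (- B * sqrt k * aR * snd t) = 1 - fst t \<and>
                  exp (- (B / sqrt k) * aL * fst t) = 1 - snd t))"

definition Fmap :: "real \<Rightarrow> real \<Rightarrow> real \<times> real \<Rightarrow> real \<times> real" where
  "Fmap B k a = ((1 + fst (theta B k a) * fst a) / 2, (1 + snd (theta B k a) * snd a) / 2)"

definition unit_square :: "(real \<times> real) set" where
  "unit_square = {0..1} \<times> {0..1}"

definition fixed_points :: "(real \<times> real \<Rightarrow> real \<times> real) \<Rightarrow> (real \<times> real) set" where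
  "fixed_points f = {p \<in> unit_square. f p = p}"

definition eigenvalue2 :: "real \<Rightarrow> real \<Rightarrow> real \<Rightarrow> real \<Rightarrow> complex \<Rightarrow> bool" where
  "eigenvalue2 a b c d l \<longleftrightarrow> (\<exists>v1 v2 :: complex. (v1, v2) \<noteq> (0, 0) \<and>
      of_real a * v1 + of_real b * v2 = l * v1 \<and> of_real c * v1 + of_real d * v2 = l * v2)"

text \<open>Jacobian attractive: F differentiable at p with derivative D, whose Jacobian matrix
  [[dF_L/da_L, dF_L/da_R], [dF_R/da_L, dF_R/da_R]] has all eigenvalues of modulus < 1.\<close>
definition jacobian_attractive :: "(real \<times> real \<Rightarrow> real \<times> real) \<Rightarrow> real \<times> real \<Rightarrow> bool" where
  "jacobian_attractive f p \<longleftrightarrow> f differentiable (at p) \<and>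
     (\<exists>D. (f has_derivative D) (at p) \<and>
        (\<forall>l. eigenvalue2 (fst (D (1, 0))) (fst (D (0, 1))) (snd (D (1, 0))) (snd (D (0, 1))) l
              \<longrightarrow> cmod l < 1))"

end

theory Submission
  imports Defs
begin


lemma fix_uniq:
  fixes h h' :: "real \<Rightarrow> real"
  assumes der: "\<And>x. (h has_real_derivative h' x) (at x)"
    and dec: "\<And>x y. 0 \<le> x \<Longrightarrow> x < y \<Longrightarrow> h' y < h' x"
    and h0: "h 0 = 0"
    and x: "0 < x" "h x = x" and y: "0 < y" "h y = y"
  shows "x = y"
proof -
  have main: "False" if ab: "0 < a" "a < b" "h a = a" "h b = b" for a b
  proof -
    obtain z1 where z1: "0 < z1" "z1 < a" "h a - h 0 = (a - 0) * h' z1"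
      using MVT2[of 0 a h h'] der ab(1) by auto
    obtain z2 where z2: "a < z2" "z2 < b" "h b - h a = (b - a) * h' z2"
      using MVT2[of a b h h'] der ab(2) by auto
    have "h' z1 = 1" using z1 ab h0 by simp
    moreover have "h' z2 = 1" using z2 ab by simp
    moreover have "h' z2 < h' z1" using dec[of z1 z2] z1 z2 by simp
    ultimately show False by simp
  qed
  show ?thesis
    using main[of x y] main[of y x] x y by (cases "x < y"; cases "y < x") auto
qed

lemma fix_exist:
  fixes h h' :: "real \<Rightarrow> real"
  assumes der: "\<And>x. (h has_real_derivative h' x) (at x)"
    and h0: "h 0 = 0" and d0: "h' 0 > 1" and h1: "h 1 < 1"
  shows "\<exists>x. 0 < x \<and> x < 1 \<and> h x = x"
proof -
  have "((\<lambda>x. h x - x) has_real_derivative (h' 0 - 1)) (at 0)"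
    using der[of 0] by (auto intro!: derivative_eq_intros)
  from DERIV_pos_inc_right[OF this] d0 obtain d where
     d0': "d > 0" and d1: "\<forall>e>0. e < d \<longrightarrow> h 0 - 0 < h (0 + e) - (0 + e)" by auto
  have d: "d > 0" "\<And>e. e > 0 \<Longrightarrow> e < d \<Longrightarrow> h 0 < h e - e" using d0' d1 by auto
  define e where "e = min (d/2) (1/2)"
  have e: "e > 0" "e < d" "e < 1" using d unfolding e_def by auto
  have he: "h e - e > 0" using d(2)[OF e(1,2)] h0 by simp
  have cont: "\<forall>x. e \<le> x \<and> x \<le> 1 \<longrightarrow> isCont (\<lambda>x. h x - x) x"
  proof -
    have "\<And>x. isCont h x" using der DERIV_isCont by blast
    then show ?thesis by (auto intro!: continuous_intros)
  qed
  obtain x where "e \<le> x" "x \<le> 1" "h x - x = 0"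
    using IVT2[of "\<lambda>x. h x - x" 1 0 e] he h1 e cont by auto
  then show ?thesis using e h1 by (intro exI[of _ x]) (auto simp: le_less)
qed



lemma sys_h:
  fixes a b tL tR :: real
  assumes "exp (- a * tR) = 1 - tL" "exp (- b * tL) = 1 - tR"
  shows "1 - exp (- a * (1 - exp (- b * tL))) = tL"
  using assms by simp

lemma h_deriv:
  fixes a b :: real
  shows "((\<lambda>x. 1 - exp (- a * (1 - exp (- b * x)))) has_real_derivative
           a * b * exp (- b * x) * exp (- a * (1 - exp (- b * x)))) (at x)"
  by (auto intro!: derivative_eq_intros simp: algebra_simps)

lemma h_dec:
  fixes a b :: real
  assumes "a > 0" "b > 0" "0 \<le> x" "x < y"
  shows "a * b * exp (- b * y) * exp (- a * (1 - exp (- b * y)))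
       < a * b * exp (- b * x) * exp (- a * (1 - exp (- b * x)))"
proof -
  have 1: "exp (- b * y) < exp (- b * x)" using assms by simp
  have 2: "exp (- a * (1 - exp (- b * y))) \<le> exp (- a * (1 - exp (- b * x)))"
    using 1 assms by (simp add: mult_le_cancel_left_pos)
  have "exp (- b * y) * exp (- a * (1 - exp (- b * y))) < exp (- b * x) * exp (- a * (1 - exp (- b * x)))"
    by (rule mult_less_le_imp_less[OF 1 2]) auto
  then show ?thesis using assms by simp
qed

lemma sys_uniq:
  fixes a b :: real and t s :: "real \<times> real"
  assumes "a > 0" "b > 0"
    and t: "fst t > 0" "snd t > 0" "exp (- a * snd t) = 1 - fst t" "exp (- b * fst t) = 1 - snd t"
    and s: "fst s > 0" "snd s > 0" "exp (- a * snd s) = 1 - fst s" "exp (- b * fst s) = 1 - snd s"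
  shows "t = s"
proof -
  have "fst t = fst s"
    by (rule fix_uniq[OF h_deriv h_dec[OF assms(1,2)]])
       (use t s sys_h[of a "snd t" "fst t" b] sys_h[of a "snd s" "fst s" b] in auto)
  moreover have "snd t = snd s" using t(4) s(4) \<open>fst t = fst s\<close> by simp
  ultimately show ?thesis by (simp add: prod_eq_iff)
qed

lemma sys_exist:
  fixes a b :: real
  assumes "a > 0" "b > 0" "a * b > 1"
  shows "\<exists>t. fst t > 0 \<and> snd t > 0 \<and> exp (- a * snd t) = 1 - fst t \<and> exp (- b * fst t) = 1 - snd t"
proof -
  obtain x where x: "0 < x" "x < 1" "1 - exp (- a * (1 - exp (- b * x))) = x"
    using fix_exist[OF h_deriv, of a b] assms by auto
  show ?thesis
    using x assms by (intro exI[of _ "(x, 1 - exp (- b * x))"]) auto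
qed



definition "solp B k aL aR t \<longleftrightarrow> fst t > 0 \<and> snd t > 0 \<and>
   exp (- (B * sqrt k * aR) * snd t) = 1 - fst t \<and> exp (- (B / sqrt k * aL) * fst t) = 1 - snd t"

lemma theta_eq:
  fixes B k aL aR :: real
  assumes "B > 0" "k > 0" "aL > 0" "aR > 0" "sqrt (aL * aR) * B > 1" "solp B k aL aR t"
  shows "theta B k (aL, aR) = t"
proof -
  have ab: "B * sqrt k * aR > 0" "B / sqrt k * aL > 0" using assms by auto
  have "(THE t. fst t > 0 \<and> snd t > 0 \<and>
                  exp (- B * sqrt k * aR * snd t) = 1 - fst t \<and>
                  exp (- (B / sqrt k) * aL * fst t) = 1 - snd t) = t"
  proof (rule the_equality)
    show "fst t > 0 \<and> snd t > 0 \<and>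
                  exp (- B * sqrt k * aR * snd t) = 1 - fst t \<and>
                  exp (- (B / sqrt k) * aL * fst t) = 1 - snd t"
      using assms(6) unfolding solp_def by (simp add: mult.assoc)
    fix s assume s: "fst s > 0 \<and> snd s > 0 \<and>
                  exp (- B * sqrt k * aR * snd s) = 1 - fst s \<and>
                  exp (- (B / sqrt k) * aL * fst s) = 1 - snd s"
    show "s = t"
      by (rule sys_uniq[OF ab]) (use s assms(6) in \<open>auto simp: solp_def mult.assoc\<close>)
  qed
  then show ?thesis using assms(5) unfolding theta_def Let_def by simp
qed

lemma theta_ex:
  fixes B k aL aR :: real
  assumes "B > 0" "k > 0" "aL > 0" "aR > 0" "sqrt (aL * aR) * B > 1"
  shows "\<exists>t. solp B k aL aR t \<and> theta B k (aL, aR) = t"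
proof -
  have ab: "B * sqrt k * aR > 0" "B / sqrt k * aL > 0" using assms by auto
  have "(sqrt (aL * aR) * B)^2 > 1^2"
    using assms(5) by (intro power_strict_mono) auto
  then have "aL * aR * B^2 > 1" using assms by (simp add: power_mult_distrib)
  moreover have "(B * sqrt k * aR) * (B / sqrt k * aL) = aL * aR * B^2"
    using assms by (simp add: power2_eq_square field_simps)
  ultimately obtain t where "fst t > 0 \<and> snd t > 0 \<and> exp (- (B * sqrt k * aR) * snd t) = 1 - fst t \<and> exp (- (B / sqrt k * aL) * fst t) = 1 - snd t"
    using sys_exist[OF ab] by auto
  then have "solp B k aL aR t" unfolding solp_def by auto
  then show ?thesis using theta_eq[OF assms, of t] by blast
qed

lemma solp_lt1: "solp B k aL aR t \<Longrightarrow> fst t < 1 \<and> snd t < 1"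
  unfolding solp_def by (metis diff_gt_0_iff_gt exp_gt_zero)



lemma ln_lt_minus_one: "0 < x \<Longrightarrow> x \<noteq> 1 \<Longrightarrow> ln x < x - 1" for x :: real
  using ln_le_minus_one[of x] ln_eq_minus_one[of x] by force

lemma ineq0:
  fixes t :: real assumes "0 < t" "t < 1"
  shows "- ln (1 - t) > t"
  using ln_lt_minus_one[of "1 - t"] assms by simp

lemma ineq1:
  fixes t :: real assumes "0 < t" "t < 1"
  shows "ln (1 - t) < - 2 * t / (2 - t)"
proof -
  define f where "f x = - 2 * x - (2 - x) * ln (1 - x)" for x :: real
  have der: "(f has_real_derivative (ln (1 - x) + x / (1 - x))) (at x)" if "0 \<le> x" "x \<le> t" for x
  proof -
    have x1: "1 - x \<noteq> 0" "x < 1" using that assms by auto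
    show ?thesis unfolding f_def
      apply (rule DERIV_cong)
       apply (use x1 in \<open>auto intro!: derivative_eq_intros\<close>)[1]
      using x1 by (simp add: field_simps)
  qed
  obtain z where z: "0 < z" "z < t" "f t - f 0 = (t - 0) * (ln (1 - z) + z / (1 - z))"
    using MVT2[of 0 t f "\<lambda>x. ln (1 - x) + x / (1 - x)"] der assms by auto
  have "ln (1 / (1 - z)) < 1 / (1 - z) - 1"
    using z assms by (intro ln_lt_minus_one) (auto simp: field_simps)
  moreover have "1 / (1 - z) - 1 = z / (1 - z)" using z assms by (simp add: field_simps)
  moreover have "ln (1 / (1 - z)) = - ln (1 - z)" using z assms by (simp add: ln_div)
  ultimately have "ln (1 - z) + z / (1 - z) > 0" by simp
  then have "f t > f 0" using z assms by (metis diff_gt_0_iff_gt diff_zero mult_pos_pos)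
  then have "(2 - t) * ln (1 - t) < - 2 * t" unfolding f_def by simp
  then show ?thesis using assms by (simp add: field_simps)
qed

lemma ineq2:
  fixes t :: real assumes "0 < t" "t < 1"
  shows "- ln (1 - t) < t * (2 - t) / (2 * (1 - t))"
proof -
  define f where "f x = x * (2 - x) + 2 * (1 - x) * ln (1 - x)" for x :: real
  have der: "(f has_real_derivative (- 2 * x - 2 * ln (1 - x))) (at x)" if "0 \<le> x" "x \<le> t" for x
  proof -
    have x1: "1 - x \<noteq> 0" "x < 1" using that assms by auto
    show ?thesis unfolding f_def
      apply (rule DERIV_cong)
       apply (use x1 in \<open>auto intro!: derivative_eq_intros\<close>)[1]
      using x1 by (simp add: field_simps)
  qed
  obtain z where z: "0 < z" "z < t" "f t - f 0 = (t - 0) * (- 2 * z - 2 * ln (1 - z))"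
    using MVT2[of 0 t f "\<lambda>x. - 2 * x - 2 * ln (1 - x)"] der assms by auto
  have "- 2 * z - 2 * ln (1 - z) > 0" using ineq0[of z] z assms by simp
  then have "f t > f 0" using z assms by (metis diff_gt_0_iff_gt diff_zero mult_pos_pos)
  then have "- 2 * (1 - t) * ln (1 - t) < t * (2 - t)" unfolding f_def by (simp add: algebra_simps)
  then show ?thesis using assms by (simp add: field_simps)
qed



lemma eig_char:
  assumes "eigenvalue2 a b c d l"
  shows "l^2 - of_real (a + d) * l + of_real (a * d - b * c) = 0"
proof -
  obtain v1 v2 :: complex where nz: "(v1, v2) \<noteq> (0, 0)"
    and e1: "of_real a * v1 + of_real b * v2 = l * v1"
    and e2: "of_real c * v1 + of_real d * v2 = l * v2"
    using assms unfolding eigenvalue2_def by blast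
  define P where "P = l^2 - of_real (a + d) * l + of_real (a * d - b * c)"
  have "P * v1 = 0"
  proof -
    have "P * v1 = (of_real d - l) * (of_real a * v1 + of_real b * v2 - l * v1)
                  - of_real b * (of_real c * v1 + of_real d * v2 - l * v2)"
      unfolding P_def by (simp add: algebra_simps power2_eq_square)
    then show ?thesis using e1 e2 by simp
  qed
  moreover have "P * v2 = 0"
  proof -
    have "P * v2 = (of_real a - l) * (of_real c * v1 + of_real d * v2 - l * v2)
                  - of_real c * (of_real a * v1 + of_real b * v2 - l * v1)"
      unfolding P_def by (simp add: algebra_simps power2_eq_square)
    then show ?thesis using e1 e2 by simp
  qed
  ultimately show ?thesis using nz unfolding P_def by auto
qed

lemma quad_root_bound:
  fixes T D :: real and l :: complex
  assumes "l^2 - of_real T * l + of_real D = 0"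
    and "0 < D" "D < 1" "1 - T + D > 0" "1 + T + D > 0"
  shows "cmod l < 1"
proof -
  obtain x y where l: "l = Complex x y" by (cases l)
  have re: "x^2 - y^2 - T * x + D = 0" and im: "2 * x * y - T * y = 0"
    using assms(1) unfolding l
    by (simp_all add: complex_eq_iff power2_eq_square algebra_simps)
  show ?thesis
  proof (cases "y = 0")
    case True
    then have q: "x^2 - T * x + D = 0" using re by simp
    have "\<bar>x\<bar> < 1"
    proof (rule ccontr)
      assume "\<not> \<bar>x\<bar> < 1"
      then have "x \<ge> 1 \<or> x \<le> -1" by auto
      then show False
      proof
        assume x1: "x \<ge> 1"
        have "x * (1 - T + D) = (1 - x) * (x - D)"
          using q by (simp add: algebra_simps power2_eq_square)
        moreover have "x * (1 - T + D) > 0" using x1 assms by simp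
        moreover have "(1 - x) * (x - D) \<le> 0" using x1 assms by (intro mult_nonpos_nonneg) auto
        ultimately show False by simp
      next
        assume x1: "x \<le> -1"
        have "x * (1 + T + D) = (1 + x) * (x + D)"
          using q by (simp add: algebra_simps power2_eq_square)
        moreover have "x * (1 + T + D) < 0" using x1 assms by (intro mult_neg_pos) auto
        moreover have "(1 + x) * (x + D) \<ge> 0" using x1 assms by (intro mult_nonpos_nonpos) auto
        ultimately show False by simp
      qed
    qed
    then show ?thesis using True l by (simp add: cmod_def)
  next
    case False
    have "y * (2 * x - T) = 0" using im by (simp add: algebra_simps)
    then have T: "T = 2 * x" using False by simp
    have "x^2 + y^2 = D" using re unfolding T by (simp add: power2_eq_square algebra_simps)
    then have "(cmod l)^2 < 1" using assms l by (simp add: cmod_power2)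
    then show ?thesis by (metis abs_norm_cancel abs_square_less_1)
  qed
qed



lemma jury_alg:
  fixes tL tR X Y P Q aL aR :: real
  assumes t: "0 < tL" "tL < 1" "0 < tR" "tR < 1"
    and pos: "X > 0" "Y > 0" "P > 0" "Q > 0"
    and aL: "aL * tL = X * tL * tL" and aR: "aR * tR = Y * tR * tR"
    and key: "P * Q * ((2 - tL) * (2 - tR)) > 4 * (X * Y)"
  defines "\<Delta> \<equiv> X * Y - P * Q"
  defines "J11 \<equiv> ((- Y) / \<Delta> * aL + tL) / 2" and "J12 \<equiv> (- (P / \<Delta>) * aL) / 2"
      and "J21 \<equiv> (- (Q / \<Delta>) * aR) / 2" and "J22 \<equiv> ((- X) / \<Delta> * aR + tR) / 2"
  shows "0 < J11 * J22 - J12 * J21 \<and> J11 * J22 - J12 * J21 < 1 \<and>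
         1 - (J11 + J22) + (J11 * J22 - J12 * J21) > 0 \<and>
         1 + (J11 + J22) + (J11 * J22 - J12 * J21) > 0"
proof -
  have aL': "aL = X * tL" using aL t by simp
  have aR': "aR = Y * tR" using aR t by simp
  have lt4: "(2 - tL) * (2 - tR) < 4"
  proof -
    have "(2 - tL) * (2 - tR) < 2 * 2" using t by (intro mult_strict_mono) auto
    then show ?thesis by simp
  qed
  have "P * Q * 4 > P * Q * ((2 - tL) * (2 - tR))" using lt4 pos by simp
  then have PQ: "P * Q > X * Y" using key by simp
  then have D: "\<Delta> < 0" unfolding \<Delta>_def by simp
  define s where "s = P * Q / (P * Q - X * Y)"
  have s1: "s > 1" unfolding s_def using PQ pos by (simp add: field_simps)
  have Dn: "\<Delta> \<noteq> 0" using D by simp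
  have sD: "s = 1 - X * Y / \<Delta>" unfolding s_def \<Delta>_def using PQ by (simp add: field_simps)
  have tr: "J11 + J22 = (tL + tR) * s / 2"
    unfolding J11_def J22_def sD aL' aR' using Dn by (simp add: field_simps)
  have j12: "J12 * J21 = (X * Y - \<Delta>) * aL * aR / (4 * \<Delta> * \<Delta>)"
    unfolding J12_def J21_def \<Delta>_def by (simp add: field_simps)
  have det: "J11 * J22 - J12 * J21 = tL * tR * s / 4"
    unfolding j12 unfolding J11_def J22_def sD aL' aR' using Dn
    by (simp add: field_simps)
  have ks: "s * (2 * (tL + tR) - tL * tR) < 4"
  proof -
    have "P * Q * (2 * (tL + tR) - tL * tR) < 4 * (P * Q - X * Y)"
      using key by (simp add: algebra_simps)
    then show ?thesis unfolding s_def using PQ by (simp add: field_simps)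
  qed
  have "tL * tR \<le> 2 * (tL + tR) - tL * tR"
  proof -
    have "0 \<le> tL * (1 - tR) + tR * (1 - tL)" using t by simp
    then show ?thesis using t by (simp add: algebra_simps)
  qed
  then have "s * (tL * tR) \<le> s * (2 * (tL + tR) - tL * tR)" using s1 by simp
  then have f1: "s * (tL * tR) < 4" using ks by simp
  have f2: "s * tL > 0" "s * tR > 0" "s * (tL * tR) > 0" using t s1 by simp_all
  have e: "s * (2 * (tL + tR) - tL * tR) = 2 * (s * tL) + 2 * (s * tR) - s * (tL * tR)"
    by (simp add: algebra_simps)
  have g1: "(tL + tR) * s / 2 = (s * tL + s * tR) / 2" by (simp add: algebra_simps)
  have g2: "tL * tR * s / 4 = s * (tL * tR) / 4" by (simp add: algebra_simps)
  have ks': "2 * (s * tL) + 2 * (s * tR) - s * (tL * tR) < 4" using ks e by simp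
  define a1 where "a1 = s * tL"
  define a2 where "a2 = s * tR"
  define a3 where "a3 = s * (tL * tR)"
  have "0 < a3 / 4 \<and> a3 / 4 < 1 \<and> 0 < 1 - (a1 + a2) / 2 + a3 / 4 \<and> 0 < 1 + (a1 + a2) / 2 + a3 / 4"
    using f1 f2 ks' unfolding a1_def[symmetric] a2_def[symmetric] a3_def[symmetric] by (auto simp: field_simps)
  then show ?thesis unfolding tr det g1 g2 a1_def a2_def a3_def .
qed



lemma conv_tanh:
  fixes u z :: real
  assumes "-1 < u" "u < 1"
  shows "exp (- z) = (1 - u) / (1 + u) \<longleftrightarrow> u = tanh (z / 2)"
proof -
  have t: "tanh (z / 2) = (1 - exp (- z)) / (1 + exp (- z))"
    using tanh_real_altdef[of "z/2"] by simp
  have e: "exp (- z) > 0" by simp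
  show ?thesis
  proof
    assume h: "exp (- z) = (1 - u) / (1 + u)"
    show "u = tanh (z / 2)" unfolding t h using assms by (simp add: field_simps)
  next
    assume h: "u = tanh (z / 2)"
    have e1: "1 + exp (- z) \<noteq> 0" using e by linarith
    show "exp (- z) = (1 - u) / (1 + u)" unfolding h t using e e1
      by (simp add: field_simps)
  qed
qed

lemma tanh_deriv_comp:
  fixes c d :: real
  shows "((\<lambda>x. tanh (c / 2 * tanh (d / 2 * x))) has_real_derivative
     (c / 2 * (1 - tanh (c / 2 * tanh (d / 2 * x))^2)) * (d / 2 * (1 - tanh (d / 2 * x)^2))) (at x)"
proof -
  have c1: "cosh y \<noteq> 0" for y :: real using cosh_real_pos[of y] by simp
  have i: "((\<lambda>x. d / 2 * x) has_real_derivative d / 2) (at x)"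
    using DERIV_cmult[OF DERIV_ident, of "d/2"] by simp
  have ii: "((\<lambda>x. tanh (d / 2 * x)) has_real_derivative (1 - tanh (d / 2 * x)^2) * (d / 2)) (at x)"
    by (rule has_field_derivative_tanh; (rule c1 i)?)
  have iii: "((\<lambda>x. c / 2 * tanh (d / 2 * x)) has_real_derivative c / 2 * ((1 - tanh (d / 2 * x)^2) * (d / 2))) (at x)"
    by (rule DERIV_cmult[OF ii])
  have iv: "((\<lambda>x. tanh (c / 2 * tanh (d / 2 * x))) has_real_derivative
      (1 - tanh (c / 2 * tanh (d / 2 * x))^2) * (c / 2 * ((1 - tanh (d / 2 * x)^2) * (d / 2)))) (at x)"
    by (rule has_field_derivative_tanh; (rule c1 iii)?)
  show ?thesis
    by (rule DERIV_cong[OF iv]) (simp only: ac_simps)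
qed

lemma tanh_sq_strict:
  fixes x y :: real
  assumes "0 \<le> x" "x < y"
  shows "1 - tanh y ^ 2 < 1 - tanh x ^ 2"
proof -
  have "tanh x < tanh y" using assms by simp
  moreover have "0 \<le> tanh x" using assms by simp
  ultimately have "tanh x ^ 2 < tanh y ^ 2" by (intro power_strict_mono) auto
  then show ?thesis by simp
qed

lemma tanh_sq_pos: "0 < 1 - tanh (x::real) ^ 2"
proof -
  have "\<bar>tanh x\<bar> < 1" using tanh_real_bounds[of x] by auto
  then have "tanh x ^ 2 < 1" by (simp add: abs_square_less_1)
  then show ?thesis by simp
qed

lemma aux_cd: "(c / 2 * a) * (d / 2 * b) = (c * d / 4) * (a * (b::real))"
  by (simp add: field_simps)

lemma hdec_tanh:
  fixes c d x y :: real
  assumes "c > 0" "d > 0" "0 \<le> x" "x < y"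
  shows "(c / 2 * (1 - tanh (c / 2 * tanh (d / 2 * y))^2)) * (d / 2 * (1 - tanh (d / 2 * y)^2))
       < (c / 2 * (1 - tanh (c / 2 * tanh (d / 2 * x))^2)) * (d / 2 * (1 - tanh (d / 2 * x)^2))"
proof -
  have a: "d / 2 * x < d / 2 * y" "0 \<le> d / 2 * x" using assms by auto
  have 1: "1 - tanh (d / 2 * y)^2 < 1 - tanh (d / 2 * x)^2" by (rule tanh_sq_strict[OF a(2) a(1)])
  have b: "tanh (d / 2 * x) \<le> tanh (d / 2 * y)" "0 \<le> tanh (d / 2 * x)" using a by auto
  have b2: "c / 2 * tanh (d / 2 * x) \<le> c / 2 * tanh (d / 2 * y)" "0 \<le> c / 2 * tanh (d / 2 * x)"
    using b assms by auto
  have 2: "1 - tanh (c / 2 * tanh (d / 2 * y))^2 \<le> 1 - tanh (c / 2 * tanh (d / 2 * x))^2"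
  proof -
    have "tanh (c / 2 * tanh (d / 2 * x)) \<le> tanh (c / 2 * tanh (d / 2 * y))"
      "0 \<le> tanh (c / 2 * tanh (d / 2 * x))" using b2 by (simp_all only: tanh_real_le_iff tanh_real_nonneg_iff)
    then have "tanh (c / 2 * tanh (d / 2 * x))^2 \<le> tanh (c / 2 * tanh (d / 2 * y))^2"
      by (rule power_mono)
    then show ?thesis by simp
  qed
  have "(1 - tanh (c / 2 * tanh (d / 2 * y))^2) * (1 - tanh (d / 2 * y)^2)
      < (1 - tanh (c / 2 * tanh (d / 2 * x))^2) * (1 - tanh (d / 2 * x)^2)"
    by (rule mult_le_less_imp_less[OF 2 1 tanh_sq_pos less_imp_le[OF tanh_sq_pos]])
  then have "(c * d / 4) * ((1 - tanh (c / 2 * tanh (d / 2 * y))^2) * (1 - tanh (d / 2 * y)^2))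
      < (c * d / 4) * ((1 - tanh (c / 2 * tanh (d / 2 * x))^2) * (1 - tanh (d / 2 * x)^2))"
    by (rule mult_strict_left_mono) (use assms in simp)
  then show ?thesis by (simp only: aux_cd)
qed

definition "asys B k p \<longleftrightarrow> fst p \<in> {1/2<..<1} \<and> snd p \<in> {1/2<..<1} \<and>
                  exp (B * sqrt k * (1 - 2 * snd p)) = (1 - fst p) / fst p \<and>
                  exp ((B / sqrt k) * (1 - 2 * fst p)) = (1 - snd p) / snd p"

lemma asys_iff:
  fixes B k :: real
  shows "asys B k p \<longleftrightarrow> (2 * fst p - 1) \<in> {0<..<1} \<and> (2 * snd p - 1) \<in> {0<..<1} \<and>
     2 * fst p - 1 = tanh (B * sqrt k * (2 * snd p - 1) / 2) \<and>
     2 * snd p - 1 = tanh (B / sqrt k * (2 * fst p - 1) / 2)"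
proof -
  define u where "u = 2 * fst p - 1"
  define v where "v = 2 * snd p - 1"
  have fp: "fst p = (1 + u) / 2" "snd p = (1 + v) / 2" unfolding u_def v_def by simp_all
  have r1: "(1 - fst p) / fst p = (1 - u) / (1 + u)" unfolding fp
    by (cases "1 + u = 0") (simp_all add: field_simps)
  have r2: "(1 - snd p) / snd p = (1 - v) / (1 + v)" unfolding fp
    by (cases "1 + v = 0") (simp_all add: field_simps)
  have e1: "B * sqrt k * (1 - 2 * snd p) = - (B * sqrt k * v)" unfolding v_def by (simp add: algebra_simps)
  have e2: "(B / sqrt k) * (1 - 2 * fst p) = - (B / sqrt k * u)" unfolding u_def by (simp add: algebra_simps)
  have dom: "fst p \<in> {1/2<..<1} \<longleftrightarrow> u \<in> {0<..<1}" "snd p \<in> {1/2<..<1} \<longleftrightarrow> v \<in> {0<..<1}"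
    unfolding fp by auto
  have c1: "u \<in> {0<..<1} \<Longrightarrow> (exp (- (B * sqrt k * v)) = (1 - u) / (1 + u) \<longleftrightarrow> u = tanh (B * sqrt k * v / 2))"
    using conv_tanh[of u "B * sqrt k * v"] by simp
  have c2: "v \<in> {0<..<1} \<Longrightarrow> (exp (- (B / sqrt k * u)) = (1 - v) / (1 + v) \<longleftrightarrow> v = tanh (B / sqrt k * u / 2))"
    using conv_tanh[of v "B / sqrt k * u"] by simp
  have L: "asys B k p \<longleftrightarrow> u \<in> {0<..<1} \<and> v \<in> {0<..<1} \<and>
     exp (- (B * sqrt k * v)) = (1 - u) / (1 + u) \<and> exp (- (B / sqrt k * u)) = (1 - v) / (1 + v)"
    unfolding asys_def by (simp only: r1 r2 e1 e2 dom)
  have R: "((2 * fst p - 1) \<in> {0<..<1} \<and> (2 * snd p - 1) \<in> {0<..<1} \<and>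
     2 * fst p - 1 = tanh (B * sqrt k * (2 * snd p - 1) / 2) \<and>
     2 * snd p - 1 = tanh (B / sqrt k * (2 * fst p - 1) / 2)) \<longleftrightarrow>
     (u \<in> {0<..<1} \<and> v \<in> {0<..<1} \<and> u = tanh (B * sqrt k * v / 2) \<and> v = tanh (B / sqrt k * u / 2))"
    unfolding u_def v_def by (rule refl)
  show ?thesis
  proof (cases "u \<in> {0<..<1} \<and> v \<in> {0<..<1}")
    case True
    then have c1': "(exp (- (B * sqrt k * v)) = (1 - u) / (1 + u)) = (u = tanh (B * sqrt k * v / 2))"
      and c2': "(exp (- (B / sqrt k * u)) = (1 - v) / (1 + v)) = (v = tanh (B / sqrt k * u / 2))"
      using c1 c2 by auto
    show ?thesis unfolding L R by (simp only: c1' c2')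
  next
    case False
    then show ?thesis unfolding L R by auto
  qed
qed




lemma asys_ex1:
  fixes B k :: real
  assumes "B > 2" "k > 0"
  shows "\<exists>!p. asys B k p"
proof -
  define c where "c = B * sqrt k"
  define d where "d = B / sqrt k"
  have cd: "c > 0" "d > 0" "c * d = B^2" unfolding c_def d_def using assms
    by (auto simp: power2_eq_square)
  define h where "h x = tanh (c / 2 * tanh (d / 2 * x))" for x
  define h' where "h' x = (c / 2 * (1 - tanh (c / 2 * tanh (d / 2 * x))^2)) * (d / 2 * (1 - tanh (d / 2 * x)^2))" for x
  have der: "(h has_real_derivative h' x) (at x)" for x
    unfolding h_def h'_def by (rule tanh_deriv_comp)
  have dec: "h' y < h' x" if "0 \<le> x" "x < y" for x y
    unfolding h'_def by (rule hdec_tanh[OF cd(1,2) that])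
  have h0: "h 0 = 0" unfolding h_def by simp
  have "B^2 > 2^2" using assms by (intro power_strict_mono) auto
  then have "c * d / 4 > 1" using cd by simp
  moreover have "h' 0 = c * d / 4" unfolding h'_def by simp
  ultimately have d0: "h' 0 > 1" by simp
  have h1: "h 1 < 1" unfolding h_def by (rule tanh_real_lt_1)
  have a1: "B * sqrt k * v / 2 = c / 2 * v" for v unfolding c_def by simp
  have a2: "B / sqrt k * v / 2 = d / 2 * v" for v unfolding d_def by simp
  have iff: "asys B k p \<longleftrightarrow> (2 * fst p - 1) \<in> {0<..<1} \<and> h (2 * fst p - 1) = 2 * fst p - 1
      \<and> 2 * snd p - 1 = tanh (d / 2 * (2 * fst p - 1))" for p
  proof -
    define u where "u = 2 * fst p - 1"
    define v where "v = 2 * snd p - 1"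
    have A: "asys B k p \<longleftrightarrow> u \<in> {0<..<1} \<and> v \<in> {0<..<1} \<and> u = tanh (c / 2 * v) \<and> v = tanh (d / 2 * u)"
      unfolding asys_iff a1 a2 u_def v_def by (rule refl)
    have "v \<in> {0<..<1}" if "u \<in> {0<..<1}" "v = tanh (d / 2 * u)"
      using that cd tanh_real_lt_1[of "d / 2 * u"] by auto
    then show ?thesis unfolding A u_def[symmetric] v_def[symmetric] h_def by auto
  qed
  obtain u where u: "0 < u" "u < 1" "h u = u" using fix_exist[OF der h0 d0 h1] by auto
  show ?thesis
  proof (rule ex1I[of _ "((1 + u) / 2, (1 + tanh (d / 2 * u)) / 2)"])
    have e: "2 * ((1 + u) / 2) - 1 = u" "2 * ((1 + tanh (d / 2 * u)) / 2) - 1 = tanh (d / 2 * u)" by (simp_all add: field_simps)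
    show "asys B k ((1 + u) / 2, (1 + tanh (d / 2 * u)) / 2)" unfolding iff fst_conv snd_conv e using u by simp
  next
    fix q assume q: "asys B k q"
    then have q': "2 * fst q - 1 \<in> {0<..<1}" "h (2 * fst q - 1) = 2 * fst q - 1"
      "2 * snd q - 1 = tanh (d / 2 * (2 * fst q - 1))" unfolding iff by auto
    have "2 * fst q - 1 = u" using fix_uniq[OF der dec h0, of "2 * fst q - 1" u] q' u by auto
    then show "q = ((1 + u) / 2, (1 + tanh (d / 2 * u)) / 2)" using q'(3)
      by (auto simp: prod_eq_iff field_simps)
  qed
qed



lemma neg_swap: "- (x::real) * (2 * a - 1) = x * (1 - 2 * a)"
  by (simp add: algebra_simps)

lemma fix_nontriv:
  fixes B k aL aR :: real
  assumes B: "B > 0" "k > 0" and a: "aL > 0" "aR > 0" and s: "solp B k aL aR t"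
    and fL: "aL = (1 + fst t * aL) / 2" and fR: "aR = (1 + snd t * aR) / 2"
  shows "B^2 > 4 \<and> asys B k (aL, aR)"
proof -
  define tL where "tL = fst t"
  define tR where "tR = snd t"
  have t: "0 < tL" "tL < 1" "0 < tR" "tR < 1" using s solp_lt1[OF s] unfolding solp_def tL_def tR_def by auto
  have eL: "exp (- (B * sqrt k * aR) * tR) = 1 - tL" and eR: "exp (- (B / sqrt k * aL) * tL) = 1 - tR"
    using s unfolding solp_def tL_def tR_def by auto
  have aL': "aL * (2 - tL) = 1" using fL unfolding tL_def by (simp add: algebra_simps)
  have aR': "aR * (2 - tR) = 1" using fR unfolding tR_def by (simp add: algebra_simps)
  have lL: "- (B * sqrt k * aR) * tR = ln (1 - tL)" using eL t by (metis ln_exp)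
  have lR: "- (B / sqrt k * aL) * tL = ln (1 - tR)" using eR t by (metis ln_exp)
  have i1: "ln (1 - tL) < - 2 * tL / (2 - tL)" by (rule ineq1) (use t in auto)
  have i2: "ln (1 - tR) < - 2 * tR / (2 - tR)" by (rule ineq1) (use t in auto)
  have aLv: "aL = 1 / (2 - tL)" using aL' t by (simp add: eq_divide_eq)
  have aRv: "aR = 1 / (2 - tR)" using aR' t by (simp add: eq_divide_eq)
  have q1: "2 * tL / (2 - tL) = 2 * (aL * tL)" unfolding aLv by simp
  have q2: "2 * tR / (2 - tR) = 2 * (aR * tR)" unfolding aRv by simp
  have g1: "B * sqrt k * (aR * tR) > 2 * (aL * tL)" using lL i1 q1 by (simp add: algebra_simps)
  have g2: "B / sqrt k * (aL * tL) > 2 * (aR * tR)" using lR i2 q2 by (simp add: algebra_simps)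
  have p: "aL * tL > 0" "aR * tR > 0" using a t by auto
  have "(B * sqrt k * (aR * tR)) * (B / sqrt k * (aL * tL)) > (2 * (aL * tL)) * (2 * (aR * tR))"
    by (rule mult_strict_mono[OF g1 g2]) (use p B in auto)
  moreover have "(B * sqrt k * (aR * tR)) * (B / sqrt k * (aL * tL)) = B^2 * ((aL * tL) * (aR * tR))"
    using B by (simp add: power2_eq_square field_simps)
  ultimately have "B^2 * ((aL * tL) * (aR * tR)) > 4 * ((aL * tL) * (aR * tR))" by simp
  then have B4: "B^2 > 4" using p by (simp add: mult_less_cancel_right)
  have dom: "aL \<in> {1/2<..<1}" "aR \<in> {1/2<..<1}"
  proof -
    have m: "aL * tL < aL * 1" "aR * tR < aR * 1" using a t by (simp_all only: mult_strict_left_mono)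
    have m2: "aL * tL > 0" "aR * tR > 0" using a t by simp_all
    have "aL * 2 = 1 + aL * tL" "aR * 2 = 1 + aR * tR" using aL' aR' by (simp_all add: algebra_simps)
    then have "aL < 1" "aL > 1/2" "aR < 1" "aR > 1/2" using m m2 by linarith+
    then show "aL \<in> {1/2<..<1}" "aR \<in> {1/2<..<1}" by auto
  qed
  have x1: "B * sqrt k * (1 - 2 * aR) = - (B * sqrt k * aR) * tR"
  proof -
    have e: "aR * tR = 2 * aR - 1" using aR' by (simp add: algebra_simps)
    have "- (B * sqrt k * aR) * tR = - (B * sqrt k) * (aR * tR)" by (simp add: mult_ac)
    then show ?thesis unfolding e neg_swap by simp
  qed
  have x2: "B / sqrt k * (1 - 2 * aL) = - (B / sqrt k * aL) * tL"
  proof -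
    have e: "aL * tL = 2 * aL - 1" using aL' by (simp add: algebra_simps)
    have "- (B / sqrt k * aL) * tL = - (B / sqrt k) * (aL * tL)" by (simp add: mult_ac)
    then show ?thesis unfolding e neg_swap by simp
  qed
  have y1: "1 - tL = (1 - aL) / aL" using aL' a by (simp add: field_simps)
  have y2: "1 - tR = (1 - aR) / aR" using aR' a by (simp add: field_simps)
  have "asys B k (aL, aR)" unfolding asys_def using dom x1 x2 y1 y2 eL eR by simp
  then show ?thesis using B4 by simp
qed

lemma fp_cases:
  fixes B k :: real
  assumes B: "B > 0" "k > 0" and q: "q \<in> fixed_points (Fmap B k)"
  shows "(q = (1/2, 1/2) \<and> B \<le> 2) \<or> (B^2 > 4 \<and> asys B k q)"
proof -
  obtain aL aR where qq: "q = (aL, aR)" by (cases q)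
  have sq: "0 \<le> aL" "aL \<le> 1" "0 \<le> aR" "aR \<le> 1" and fx: "Fmap B k (aL, aR) = (aL, aR)"
    using q unfolding qq fixed_points_def unit_square_def by auto
  show ?thesis
  proof (cases "sqrt (aL * aR) * B \<le> 1")
    case True
    then have "theta B k (aL, aR) = (0, 0)" unfolding theta_def Let_def by simp
    then have "aL = 1/2" "aR = 1/2" using fx unfolding Fmap_def by simp_all
    then have "q = (1/2, 1/2)" unfolding qq by simp
    moreover have "B \<le> 2"
    proof -
      have "sqrt (1/2 * (1/2)) * B \<le> 1" using True \<open>aL = 1/2\<close> \<open>aR = 1/2\<close> by simp
      moreover have "sqrt (1/4::real) = 1/2" by (simp add: real_sqrt_divide)
      ultimately show ?thesis by simp
    qed
    ultimately show ?thesis by simp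
  next
    case False
    then have "sqrt (aL * aR) \<noteq> 0" by auto
    moreover have "sqrt (aL * aR) \<ge> 0" using sq by simp
    ultimately have "sqrt (aL * aR) > 0" by linarith
    then have "aL * aR > 0" using real_sqrt_gt_0_iff by blast
    then have a: "aL > 0" "aR > 0" using sq by (auto simp: zero_less_mult_iff)
    obtain t where t: "solp B k aL aR t" "theta B k (aL, aR) = t"
      using theta_ex[OF B a] False by auto
    have "aL = (1 + fst t * aL) / 2" "aR = (1 + snd t * aR) / 2"
      using fx t(2) unfolding Fmap_def by (auto simp: prod_eq_iff)
    then show ?thesis using fix_nontriv[OF B a t(1)] qq by simp
  qed
qed

lemma asys_fix:
  fixes B k :: real
  assumes B: "B > 2" "k > 0" and p: "asys B k p"
  defines "tL \<equiv> 2 - 1 / fst p" and "tR \<equiv> 2 - 1 / snd p"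
  shows "solp B k (fst p) (snd p) (tL, tR)" and "theta B k p = (tL, tR)"
    and "p \<in> fixed_points (Fmap B k)" and "sqrt (fst p * snd p) * B > 1"
proof -
  obtain aL aR where pp: "p = (aL, aR)" by (cases p)
  have d: "1/2 < aL" "aL < 1" "1/2 < aR" "aR < 1" and
    e1: "exp (B * sqrt k * (1 - 2 * aR)) = (1 - aL) / aL" and
    e2: "exp ((B / sqrt k) * (1 - 2 * aL)) = (1 - aR) / aR"
    using p unfolding asys_def pp by auto
  have tt: "tL = 2 - 1 / aL" "tR = 2 - 1 / aR" unfolding tL_def tR_def pp by simp_all
  have tpos: "tL > 0" "tR > 0" unfolding tt using d by (auto simp: field_simps)
  have a1: "aR * tR = 2 * aR - 1" "aL * tL = 2 * aL - 1" unfolding tt using d by (auto simp: field_simps)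
  have "exp (- (B * sqrt k * aR) * tR) = 1 - tL"
  proof -
    have "- (B * sqrt k * aR) * tR = - (B * sqrt k) * (aR * tR)" by (simp add: mult_ac)
    then have "- (B * sqrt k * aR) * tR = B * sqrt k * (1 - 2 * aR)"
      unfolding a1 neg_swap .
    moreover have "1 - tL = (1 - aL) / aL" unfolding tt using d by (simp add: field_simps)
    ultimately show ?thesis using e1 by simp
  qed
  moreover have "exp (- (B / sqrt k * aL) * tL) = 1 - tR"
  proof -
    have "- (B / sqrt k * aL) * tL = - (B / sqrt k) * (aL * tL)" by (simp add: mult_ac)
    then have "- (B / sqrt k * aL) * tL = (B / sqrt k) * (1 - 2 * aL)"
      unfolding a1 neg_swap .
    moreover have "1 - tR = (1 - aR) / aR" unfolding tt using d by (simp add: field_simps)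
    ultimately show ?thesis using e2 by simp
  qed
  ultimately show s: "solp B k (fst p) (snd p) (tL, tR)" unfolding solp_def pp using tpos by simp
  have "1/2 * (1/2) < aL * aR" using d by (intro mult_strict_mono) auto
  then have "sqrt (aL * aR) > sqrt (1/4)" by (intro real_sqrt_less_mono) simp
  moreover have "sqrt (1/4::real) = 1/2" by (simp add: real_sqrt_divide)
  ultimately have "sqrt (aL * aR) > 1/2" by simp
  moreover have sp: "sqrt (aL * aR) > 0" using calculation by linarith
  ultimately have "1/2 * 2 < sqrt (aL * aR) * B" using B by (intro mult_strict_mono) simp_all
  then show sB: "sqrt (fst p * snd p) * B > 1" unfolding pp by simp
  have B0: "B > 0" using B by simp
  have a0: "aL > 0" "aR > 0" using d by auto
  show th: "theta B k p = (tL, tR)" unfolding pp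
    by (rule theta_eq[OF B0 B(2) a0]) (use sB s pp in simp_all)
  have "Fmap B k p = p" unfolding Fmap_def th using a1 unfolding pp by (simp add: algebra_simps)
  then show "p \<in> fixed_points (Fmap B k)" unfolding fixed_points_def unit_square_def pp using d by auto
qed



lemma jac_center:
  fixes B k :: real
  assumes "B > 0" "B < 2"
  shows "jacobian_attractive (Fmap B k) (1/2, 1/2)"
proof -
  define S where "S = {q :: real \<times> real. sqrt (fst q * snd q) * B < 1}"
  have oS: "open S" unfolding S_def
    by (rule open_Collect_less) (intro continuous_intros)+
  have s1: "sqrt (1/4::real) = 1/2" by (simp add: real_sqrt_divide)
  have "sqrt (1/4::real) * B < sqrt (1/4) * 2" by (rule mult_strict_left_mono) (use assms in auto)
  then have "sqrt (1/4::real) * B < 1" unfolding s1 by simp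
  then have pS: "(1/2, 1/2) \<in> S" unfolding S_def by simp
  have eq: "(\<lambda>_. (1/2, 1/2)) q = Fmap B k q" if "q \<in> S" for q
  proof -
    have "theta B k q = (0, 0)" using that unfolding S_def theta_def Let_def by auto
    then show ?thesis unfolding Fmap_def by simp
  qed
  have d: "(Fmap B k has_derivative (\<lambda>_. (0, 0))) (at (1/2, 1/2))"
    by (rule has_derivative_transform_within_open[OF _ oS pS eq])
       (simp add: zero_prod_def[symmetric] has_derivative_const)
  have ev: "cmod l < 1" if "eigenvalue2 0 0 0 0 l" for l
  proof -
    have "l = 0" using that unfolding eigenvalue2_def by auto
    then show ?thesis by simp
  qed
  show ?thesis unfolding jacobian_attractive_def
    using d ev by (auto intro: differentiableI)
qed



lemma derA:
  fixes c d x y :: real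
  assumes "c > 0" "d > 0" "0 < x" "x < 1" "0 < y" "y < 1"
  shows "((\<lambda>z. (- ln (1 - snd z) / (d * fst z), - ln (1 - fst z) / (c * snd z))) has_derivative
     (\<lambda>h. (ln (1 - y) / (d * x * x) * fst h + 1 / ((1 - y) * d * x) * snd h,
           1 / ((1 - x) * c * y) * fst h + ln (1 - x) / (c * y * y) * snd h))) (at (x, y))"
proof -
  have 1: "((\<lambda>z. - ln (1 - snd z) / (d * fst z)) has_derivative
     (\<lambda>h. ln (1 - y) / (d * x * x) * fst h + 1 / ((1 - y) * d * x) * snd h)) (at (x, y))"
    apply (rule has_derivative_eq_rhs)
     apply (use assms in \<open>auto intro!: derivative_eq_intros\<close>)[1]
    apply (rule ext)
    using assms apply (simp add: field_simps)
    done
  have 2: "((\<lambda>z. - ln (1 - fst z) / (c * snd z)) has_derivative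
     (\<lambda>h. 1 / ((1 - x) * c * y) * fst h + ln (1 - x) / (c * y * y) * snd h)) (at (x, y))"
    apply (rule has_derivative_eq_rhs)
     apply (use assms in \<open>auto intro!: derivative_eq_intros\<close>)[1]
    apply (rule ext)
    using assms apply (simp add: field_simps)
    done
  show ?thesis by (rule has_derivative_Pair[OF 1 2])
qed

lemma theta_A:
  fixes B k x y :: real
  assumes B: "B > 0" "k > 0" and xy: "0 < x" "x < 1" "0 < y" "y < 1"
  shows "theta B k (- ln (1 - y) / (B / sqrt k * x), - ln (1 - x) / (B * sqrt k * y)) = (x, y)"
proof -
  define c where "c = B * sqrt k"
  define d where "d = B / sqrt k"
  have cd: "c > 0" "d > 0" "c * d = B^2" unfolding c_def d_def using B by (auto simp: power2_eq_square)
  define LL where "LL = - ln (1 - x)"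
  define LR where "LR = - ln (1 - y)"
  have L: "LL > x" "LR > y" unfolding LL_def LR_def using ineq0 xy by auto
  define aL where "aL = LR / (d * x)"
  define aR where "aR = LL / (c * y)"
  have a: "aL > 0" "aR > 0" unfolding aL_def aR_def using L xy cd by auto
  have "aL * aR * B^2 = (LL / x) * (LR / y)" unfolding aL_def aR_def cd(3)[symmetric]
    using cd xy B by (simp add: field_simps)
  moreover have "(LL / x) * (LR / y) > 1 * 1"
    using L xy by (intro mult_strict_mono) (auto simp: field_simps)
  ultimately have g: "aL * aR * B^2 > 1" by simp
  have "sqrt (aL * aR) * B = sqrt (aL * aR * B^2)" using B by (simp add: real_sqrt_mult)
  also have "\<dots> > 1" using g by simp
  finally have sB: "sqrt (aL * aR) * B > 1" .
  have e1: "exp (- (B * sqrt k * aR) * y) = 1 - x"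
  proof -
    have "- (B * sqrt k * aR) * y = ln (1 - x)" unfolding aR_def c_def[symmetric] LL_def
      using cd xy by (simp add: field_simps)
    then show ?thesis using xy by simp
  qed
  have e2: "exp (- (B / sqrt k * aL) * x) = 1 - y"
  proof -
    have "- (B / sqrt k * aL) * x = ln (1 - y)" unfolding aL_def d_def[symmetric] LR_def
      using cd xy by (simp add: field_simps)
    then show ?thesis using xy by simp
  qed
  have "solp B k aL aR (x, y)" unfolding solp_def using e1 e2 xy by simp
  then have "theta B k (aL, aR) = (x, y)" by (rule theta_eq[OF B a sB])
  then show ?thesis unfolding aL_def aR_def LL_def LR_def c_def d_def .
qed



lemma jac_fix:
  fixes B k :: real
  assumes B: "B > 2" "k > 0" and p: "asys B k p"
  shows "jacobian_attractive (Fmap B k) p"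
proof -
  obtain aL aR where pp: "p = (aL, aR)" by (cases p)
  define tL where "tL = 2 - 1 / fst p"
  define tR where "tR = 2 - 1 / snd p"
  have s: "solp B k aL aR (tL, tR)" and th: "theta B k p = (tL, tR)"
    using asys_fix[OF B p] unfolding tL_def tR_def pp by auto
  have t: "0 < tL" "tL < 1" "0 < tR" "tR < 1" using s solp_lt1[OF s] unfolding solp_def by auto
  have dd: "1/2 < aL" "aL < 1" "1/2 < aR" "aR < 1" using p unfolding asys_def pp by auto
  have B0: "B > 0" using B by simp
  define c where "c = B * sqrt k"
  define d where "d = B / sqrt k"
  have cd: "c > 0" "d > 0" unfolding c_def d_def using B by auto
  define A where "A z = (- ln (1 - snd z) / (d * fst z), - ln (1 - fst z) / (c * snd z))" for z :: "real \<times> real"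
  define S where "S = {0<..<(1::real)} \<times> {0<..<(1::real)}"
  have oS: "open S" unfolding S_def by (intro open_Times open_greaterThanLessThan)
  have tS: "(tL, tR) \<in> S" unfolding S_def using t by auto
  define m11 where "m11 x y = ln (1 - y) / (d * x * x)" for x y :: real
  define m12 where "m12 x y = 1 / ((1 - y) * d * x)" for x y :: real
  define m21 where "m21 x y = 1 / ((1 - x) * c * y)" for x y :: real
  define m22 where "m22 x y = ln (1 - x) / (c * y * y)" for x y :: real
  have dA: "(A has_derivative (\<lambda>h. (m11 x y * fst h + m12 x y * snd h, m21 x y * fst h + m22 x y * snd h))) (at (x, y))"
    if "(x, y) \<in> S" for x y
    unfolding A_def m11_def m12_def m21_def m22_def
    by (rule derA[OF cd]) (use that in \<open>auto simp: S_def\<close>)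
  have contA: "continuous_on S A"
  proof (rule continuous_at_imp_continuous_on, safe)
    fix x y assume "(x, y) \<in> S"
    from has_derivative_continuous[OF dA[OF this]] show "isCont A (x, y)" .
  qed
  have gf: "theta B k (A z) = z" if "z \<in> S" for z
  proof -
    obtain x y where z: "z = (x, y)" by (cases z)
    show ?thesis using theta_A[OF B0 B(2), of x y] that unfolding z A_def c_def d_def S_def by auto
  qed
  have Ap: "A (tL, tR) = p"
  proof -
    have e1: "exp (- (B * sqrt k * aR) * tR) = 1 - tL" and e2: "exp (- (B / sqrt k * aL) * tL) = 1 - tR"
      using s unfolding solp_def by auto
    have l1: "- ln (1 - tL) = c * aR * tR" using e1 unfolding c_def by (metis ln_exp minus_mult_left minus_minus)
    have l2: "- ln (1 - tR) = d * aL * tL" using e2 unfolding d_def by (metis ln_exp minus_mult_left minus_minus)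
    show ?thesis unfolding A_def pp fst_conv snd_conv l1 l2 using cd t by simp
  qed
  define X where "X = - m11 tL tR"
  define Y where "Y = - m22 tL tR"
  define P where "P = m12 tL tR"
  define Q where "Q = m21 tL tR"
  define LL where "LL = - ln (1 - tL)"
  define LR where "LR = - ln (1 - tR)"
  have LLp: "LL > 0" "LR > 0" unfolding LL_def LR_def using ineq0[of tL] ineq0[of tR] t by auto
  have Xv: "X = LR / (d * tL * tL)" unfolding X_def m11_def LR_def by simp
  have Yv: "Y = LL / (c * tR * tR)" unfolding Y_def m22_def LL_def by simp
  have pos: "X > 0" "Y > 0" "P > 0" "Q > 0" unfolding Xv Yv P_def Q_def m12_def m21_def
    using LLp cd t by auto
  have aLX: "aL * tL = X * tL * tL"
  proof -
    have e2: "exp (- (B / sqrt k * aL) * tL) = 1 - tR" using s unfolding solp_def by auto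
    have "LR = d * aL * tL" using e2 unfolding d_def LR_def by (metis ln_exp minus_mult_left minus_minus)
    then show ?thesis unfolding Xv using cd t by (simp add: field_simps)
  qed
  have aRY: "aR * tR = Y * tR * tR"
  proof -
    have e1: "exp (- (B * sqrt k * aR) * tR) = 1 - tL" using s unfolding solp_def by auto
    have "LL = c * aR * tR" using e1 unfolding c_def LL_def by (metis ln_exp minus_mult_left minus_minus)
    then show ?thesis unfolding Yv using cd t by (simp add: field_simps)
  qed
  have key: "P * Q * ((2 - tL) * (2 - tR)) > 4 * (X * Y)"
  proof -
    have i1: "2 * LL * (1 - tL) < tL * (2 - tL)" using ineq2[of tL] t unfolding LL_def by (simp add: field_simps)
    have i2: "2 * LR * (1 - tR) < tR * (2 - tR)" using ineq2[of tR] t unfolding LR_def by (simp add: field_simps)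
    have "(2 * LL * (1 - tL)) * (2 * LR * (1 - tR)) < (tL * (2 - tL)) * (tR * (2 - tR))"
      by (rule mult_strict_mono[OF i1 i2]) (use t LLp in auto)
    then have num: "0 < tL * tR * ((2 - tL) * (2 - tR)) - 4 * (LL * LR * ((1 - tL) * (1 - tR)))"
      by (simp add: algebra_simps)
    define K where "K = c * d * tL * tR"
    define u where "u = (1 - tL) * (1 - tR)"
    define w where "w = tL * tR"
    define M where "M = (2 - tL) * (2 - tR)"
    define N where "N = LL * LR"
    have Kp: "K > 0" "u > 0" "w > 0" unfolding K_def u_def w_def using cd t by auto
    have PQ: "P * Q = 1 / (K * u)" unfolding P_def Q_def m12_def m21_def K_def u_def
      using cd t by (simp add: field_simps)
    have XY: "X * Y = N / (K * w)" unfolding Xv Yv N_def K_def w_def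
      using cd t by (simp add: field_simps)
    have num': "M * w - 4 * N * u > 0" using num unfolding M_def N_def u_def w_def by (simp add: algebra_simps)
    have "M / (K * u) - 4 * (N / (K * w)) = (M * w - 4 * N * u) / (K * u * w)"
      using Kp by (simp add: field_simps)
    also have "\<dots> > 0" using num' Kp by simp
    finally have "P * Q * ((2 - tL) * (2 - tR)) - 4 * (X * Y) > 0" unfolding PQ XY M_def by simp
    then show ?thesis by simp
  qed
  define \<Delta> where "\<Delta> = X * Y - P * Q"
  have "P * Q * 4 > P * Q * ((2 - tL) * (2 - tR))"
  proof -
    have "(2 - tL) * (2 - tR) < 2 * 2" using t by (intro mult_strict_mono) auto
    then show ?thesis using pos by simp
  qed
  then have Dn: "\<Delta> \<noteq> 0" unfolding \<Delta>_def using key by simp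
  define g' where "g' h = ((- Y * fst h - P * snd h) / \<Delta>, (- X * snd h - Q * fst h) / \<Delta>)" for h :: "real \<times> real"
  have dA': "(A has_derivative (\<lambda>h. (- X * fst h + P * snd h, Q * fst h - Y * snd h))) (at (tL, tR))"
    using dA[OF tS] unfolding X_def Y_def P_def Q_def by simp
  have idg: "(\<lambda>h. (- X * fst h + P * snd h, Q * fst h - Y * snd h)) \<circ> g' = id"
  proof (rule ext)
    fix h :: "real \<times> real"
    show "((\<lambda>h. (- X * fst h + P * snd h, Q * fst h - Y * snd h)) \<circ> g') h = id h"
    proof -
      obtain a b where h: "h = (a, b)" by (cases h)
      have c1: "- X * ((- Y * a - P * b) / \<Delta>) + P * ((- X * b - Q * a) / \<Delta>) = (X * Y - P * Q) * a / \<Delta>"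
        using Dn by (simp add: field_simps)
      have c2: "Q * ((- Y * a - P * b) / \<Delta>) - Y * ((- X * b - Q * a) / \<Delta>) = (X * Y - P * Q) * b / \<Delta>"
        using Dn by (simp add: field_simps)
      show ?thesis unfolding g'_def comp_def h fst_conv snd_conv c1 c2 \<Delta>_def[symmetric]
        using Dn by simp
    qed
  qed
  have dth: "(theta B k has_derivative g') (at p)"
    using has_derivative_inverse_strong[OF oS tS contA gf dA' idg] Ap by simp
  have Feq: "Fmap B k = (\<lambda>a. ((1 + fst (theta B k a) * fst a) / 2, (1 + snd (theta B k a) * snd a) / 2))"
    by (rule ext) (simp add: Fmap_def)
  define D where "D h = ((fst (g' h) * aL + tL * fst h) / 2, (snd (g' h) * aR + tR * snd h) / 2)" for h :: "real \<times> real"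
  have dF: "(Fmap B k has_derivative D) (at p)"
    unfolding Feq
    apply (rule has_derivative_eq_rhs)
     apply (auto intro!: derivative_eq_intros dth)[1]
    apply (rule ext)
    using th unfolding pp apply (simp add: D_def algebra_simps)
    done
  have J: "fst (D (1, 0)) = ((- Y) / (X * Y - P * Q) * aL + tL) / 2"
    "fst (D (0, 1)) = (- (P / (X * Y - P * Q)) * aL) / 2"
    "snd (D (1, 0)) = (- (Q / (X * Y - P * Q)) * aR) / 2"
    "snd (D (0, 1)) = ((- X) / (X * Y - P * Q) * aR + tR) / 2"
  proof -
    have g1: "g' (1, 0) = ((- Y) / \<Delta>, - (Q / \<Delta>))" unfolding g'_def by simp
    have g2: "g' (0, 1) = (- (P / \<Delta>), (- X) / \<Delta>)" unfolding g'_def by simp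
    show "fst (D (1, 0)) = ((- Y) / (X * Y - P * Q) * aL + tL) / 2"
      "fst (D (0, 1)) = (- (P / (X * Y - P * Q)) * aL) / 2"
      "snd (D (1, 0)) = (- (Q / (X * Y - P * Q)) * aR) / 2"
      "snd (D (0, 1)) = ((- X) / (X * Y - P * Q) * aR + tR) / 2"
      unfolding D_def g1 g2 \<Delta>_def[symmetric] by simp_all
  qed
  have jury: "0 < J11 * J22 - J12 * J21 \<and> J11 * J22 - J12 * J21 < 1 \<and>
         1 - (J11 + J22) + (J11 * J22 - J12 * J21) > 0 \<and>
         1 + (J11 + J22) + (J11 * J22 - J12 * J21) > 0"
    if "J11 = fst (D (1, 0))" "J12 = fst (D (0, 1))" "J21 = snd (D (1, 0))" "J22 = snd (D (0, 1))"
    for J11 J12 J21 J22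
    unfolding that J by (rule jury_alg[OF t pos aLX aRY key])
  have ev: "cmod l < 1"
    if "eigenvalue2 (fst (D (1, 0))) (fst (D (0, 1))) (snd (D (1, 0))) (snd (D (0, 1))) l" for l
  proof -
    note q = eig_char[OF that]
    note jj = jury[OF refl refl refl refl]
    show ?thesis by (rule quad_root_bound[OF q jj[THEN conjunct1] jj[THEN conjunct2, THEN conjunct1]
        jj[THEN conjunct2, THEN conjunct2, THEN conjunct1] jj[THEN conjunct2, THEN conjunct2, THEN conjunct2]])
  qed
  have "Fmap B k differentiable (at p)" using dF by (rule differentiableI)
  then show ?thesis unfolding jacobian_attractive_def using dF ev by blast
qed



theorem lemma9:
  fixes B k :: real
  assumes "k \<ge> 1" and "B > 0"
  shows "(B < 2 \<longrightarrow>
            fixed_points (Fmap B k) = {(1/2, 1/2)} \<and> jacobian_attractive (Fmap B k) (1/2, 1/2))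
       \<and> (B > 2 \<longrightarrow>
            (\<exists>!p. fst p \<in> {1/2<..<1} \<and> snd p \<in> {1/2<..<1} \<and>
                  exp (B * sqrt k * (1 - 2 * snd p)) = (1 - fst p) / fst p \<and>
                  exp ((B / sqrt k) * (1 - 2 * fst p)) = (1 - snd p) / snd p)
          \<and> (\<forall>p. fst p \<in> {1/2<..<1} \<and> snd p \<in> {1/2<..<1} \<and>
                  exp (B * sqrt k * (1 - 2 * snd p)) = (1 - fst p) / fst p \<and>
                  exp ((B / sqrt k) * (1 - 2 * fst p)) = (1 - snd p) / snd p
                \<longrightarrow> fixed_points (Fmap B k) = {p} \<and> jacobian_attractive (Fmap B k) p))"
proof -
  have k: "k > 0" using assms(1) by simp
  have B: "B > 0" by (rule assms(2))
  have part1: "fixed_points (Fmap B k) = {(1/2, 1/2)} \<and> jacobian_attractive (Fmap B k) (1/2, 1/2)"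
    if B2: "B < 2"
  proof -
    have sub: "fixed_points (Fmap B k) \<subseteq> {(1/2, 1/2)}"
    proof
      fix q assume q: "q \<in> fixed_points (Fmap B k)"
      have "B^2 < 2^2" using B B2 by (intro power_strict_mono) auto
      then show "q \<in> {(1/2, 1/2)}" using fp_cases[OF B k q] by auto
    qed
    have "(1/2, 1/2) \<in> fixed_points (Fmap B k)"
    proof -
      have s1: "sqrt (1/4::real) = 1/2" by (simp add: real_sqrt_divide)
      have "sqrt (1/4::real) * B \<le> 1" unfolding s1 using B2 by simp
      then have "sqrt (1/2 * (1/2::real)) * B \<le> 1" by simp
      then have "theta B k (1/2, 1/2) = (0, 0)" unfolding theta_def Let_def by simp
      then have "Fmap B k (1/2, 1/2) = (1/2, 1/2)" unfolding Fmap_def by simp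
      then show ?thesis unfolding fixed_points_def unit_square_def by simp
    qed
    then show ?thesis using sub jac_center[OF B B2] by blast
  qed
  have part2: "(\<exists>!p. asys B k p) \<and> (\<forall>p. asys B k p \<longrightarrow> fixed_points (Fmap B k) = {p} \<and> jacobian_attractive (Fmap B k) p)"
    if B2: "B > 2"
  proof -
    have ex1: "\<exists>!p. asys B k p" by (rule asys_ex1[OF B2 k])
    have "fixed_points (Fmap B k) = {p} \<and> jacobian_attractive (Fmap B k) p" if p: "asys B k p" for p
    proof -
      have "fixed_points (Fmap B k) \<subseteq> {p}"
      proof
        fix q assume q: "q \<in> fixed_points (Fmap B k)"
        from fp_cases[OF B k q] B2 have "asys B k q" by auto
        then show "q \<in> {p}" using ex1 p by auto
      qed
      moreover have "p \<in> fixed_points (Fmap B k)" by (rule asys_fix(3)[OF B2 k p])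
      ultimately show ?thesis using jac_fix[OF B2 k p] by blast
    qed
    then show ?thesis using ex1 by blast
  qed
  show ?thesis using part1 part2 unfolding asys_def by blast
qed

end
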